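(* Let the polynomials $q_{p,\nu}$ be defined by the recursive construction described in the context. There exists a constant $C$, independent of $p$ and $\nu$, such that \[ \|q_{p,\nu}\|_0^2\le C\,p^{2\nu-1}\qquad\text{for all } p,\nu\in\mathbb{N}. \]
   Context: $\|\cdot\|_0$ is the $L^2(-1,1)$ norm. $L_j$ denotes the Legendre polynomial of degree $j$ on $(-1,1)$, normalized so that $L_j(1)=1$. The $n$-th primitive of $L_i$ is defined by $\psi_{i,0}:=L_i$ and $\psi_{i,n}(x):=\int_{-1}^x\psi_{i,n-1}(\zeta)\,d\zeta$. Recursive construction: - Set $q_{p,0}:=\tfrac12(L_p+L_{p+1})$. - For $\nu\ge0$, set $q_{p,\nu+1}:=q_{p,\nu}+\alpha_{p,\nu+1}\psi_{p,\nu+1}+\beta_{p,\nu+1}\psi_{p+1,\nu+1}$, where \[ \alpha_{p,\nu+1}:=-\frac{q_{p,\nu}^{(\nu+1)}(1)+(-1)^p q_{p,\nu}^{(\nu+1)}(-1)}{2},\qquad \beta_{p,\nu+1}:=-\frac{q_{p,\nu}^{(\nu+1)}(1)-(-1)^p q_{p,\nu}^{(\nu+1)}(-1)}{2}. \] *)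

theory Defs
  imports "HOL-Analysis.Analysis" "HOL-Computational_Algebra.Polynomial"
begin

fun legendre :: "nat \<Rightarrow> real poly" where
  "legendre 0 = 1"
| "legendre (Suc 0) = [:0, 1:]"
| "legendre (Suc (Suc n)) =
     smult (1 / (real n + 2))
       (smult (2 * real n + 3) ([:0, 1:] * legendre (Suc n)) - smult (real n + 1) (legendre n))"

definition prim :: "real poly \<Rightarrow> real poly" where
  "prim P = (THE Q. pderiv Q = P \<and> poly Q (-1) = 0)"

fun psi :: "nat \<Rightarrow> nat \<Rightarrow> real poly" where
  "psi i 0 = legendre i"
| "psi i (Suc n) = prim (psi i n)"

fun qpol :: "nat \<Rightarrow> nat \<Rightarrow> real poly" where
  "qpol p 0 = smult (1/2) (legendre p + legendre (p + 1))"
| "qpol p (Suc \<nu>) =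
     (let d = (pderiv ^^ (Suc \<nu>)) (qpol p \<nu>);
          a = - (poly d 1 + (-1) ^ p * poly d (-1)) / 2;
          b = - (poly d 1 - (-1) ^ p * poly d (-1)) / 2
      in qpol p \<nu> + smult a (psi p (Suc \<nu>)) + smult b (psi (p + 1) (Suc \<nu>)))"

definition L2sq :: "real poly \<Rightarrow> real" where
  "L2sq f = integral {-1..1} (\<lambda>x. (poly f x)\<^sup>2)"

end

theory Submission
  imports Defs
begin

lemma pderiv_sum: "pderiv (sum f A) = (\<Sum>x\<in>A. pderiv (f x))"
  by (induction A rule: infinite_finite_induct) (simp_all add: pderiv_add)

lemma prim_exists: "\<exists>Q. pderiv Q = (P::real poly) \<and> poly Q (-1) = 0"
proof -
  define Q0 where "Q0 = (\<Sum>i\<le>degree P. monom (coeff P i / real (Suc i)) (Suc i))"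
  have "pderiv Q0 = (\<Sum>i\<le>degree P. monom (coeff P i) i)"
    unfolding Q0_def by (simp add: pderiv_sum pderiv_monom)
  also have "\<dots> = P" by (rule poly_as_sum_of_monoms)
  finally have d: "pderiv Q0 = P" .
  show ?thesis
    by (rule exI[of _ "Q0 - [:poly Q0 (-1):]"]) (simp add: d pderiv_diff)
qed

lemma prim_uniq:
  fixes Q1 Q2 :: "real poly"
  assumes "pderiv Q1 = pderiv Q2" "poly Q1 (-1) = poly Q2 (-1)"
  shows "Q1 = Q2"
proof -
  have "pderiv (Q1 - Q2) = 0" using assms by (simp add: pderiv_diff)
  then obtain h where h: "Q1 - Q2 = [:h:]" using pderiv_iszero by blast
  have "poly (Q1 - Q2) (-1) = 0" using assms(2) by simp
  then have "h = 0" using h by simp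
  then show ?thesis using h by simp
qed

lemma prim_spec: "pderiv (prim P) = P \<and> poly (prim P) (-1) = 0"
  unfolding prim_def
proof (rule theI')
  show "\<exists>!Q. pderiv Q = P \<and> poly Q (- 1) = 0"
    using prim_exists prim_uniq by metis
qed

lemma pderiv_prim [simp]: "pderiv (prim P) = P" using prim_spec by blast
lemma prim_m1 [simp]: "poly (prim P) (-1) = 0" using prim_spec by blast

lemma prim_eqI: "pderiv Q = P \<Longrightarrow> poly Q (-1) = 0 \<Longrightarrow> prim P = Q"
  by (rule prim_uniq) auto

lemma prim_add: "prim (P + Q) = prim P + prim Q"
  by (rule prim_eqI) (auto simp: pderiv_add)
lemma prim_diff: "prim (P - Q) = prim P - prim Q"
  by (rule prim_eqI) (auto simp: pderiv_diff)
lemma prim_smult: "prim (smult c P) = smult c (prim P)"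
  by (rule prim_eqI) (auto simp: pderiv_smult)
lemma prim_pderiv: "prim (pderiv h) = h - [:poly h (-1):]"
  by (rule prim_eqI) (auto simp: pderiv_diff)

abbreviation L where "L \<equiv> legendre"

lemma leg_SS: "L (Suc (Suc n)) = smult (1 / (real n + 2))
       (smult (2 * real n + 3) ([:0, 1:] * L (Suc n)) - smult (real n + 1) (L n))"
  by simp

lemma leg_rec_pt: "(real n + 2) * poly (L (Suc (Suc n))) x =
   (2 * real n + 3) * x * poly (L (Suc n)) x - (real n + 1) * poly (L n) x"
  by (simp add: field_simps)

declare legendre.simps(3)[simp del]

lemma leg_rec_d: "(real n + 2) * poly (pderiv (L (Suc (Suc n)))) x =
   (2 * real n + 3) * (poly (L (Suc n)) x + x * poly (pderiv (L (Suc n))) x)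
   - (real n + 1) * poly (pderiv (L n)) x"
proof -
  have "pderiv (L (Suc (Suc n))) = smult (1 / (real n + 2))
       (smult (2 * real n + 3) ([:0, 1:] * pderiv (L (Suc n)) + L (Suc n)) - smult (real n + 1) (pderiv (L n)))"
    by (simp only: legendre.simps(3) pderiv_smult pderiv_diff pderiv_mult) (simp add: pderiv_pCons)
  then show ?thesis by (simp add: field_simps)
qed

lemma leg_one: "poly (L n) 1 = 1"
proof (induction n rule: legendre.induct)
  case (3 n)
  have "(real n + 2) * poly (L (Suc (Suc n))) 1 = (real n + 2) * 1"
    using leg_rec_pt[of n 1] 3 by simp
  moreover have "real n + 2 \<noteq> 0" by simp
  ultimately show ?case by simp
qed auto

lemma leg_mone: "poly (L n) (-1) = (-1)^n"
proof (induction n rule: legendre.induct)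
  case (3 n)
  have "(real n + 2) * poly (L (Suc (Suc n))) (-1) = (real n + 2) * (-1)^(Suc (Suc n))"
    using leg_rec_pt[of n "-1"] 3 by (simp add: algebra_simps)
  moreover have "real n + 2 \<noteq> 0" by simp
  ultimately show ?case by simp
qed auto

lemma leg_II_III: "x * poly (pderiv (L (Suc n))) x - poly (pderiv (L n)) x = real (Suc n) * poly (L (Suc n)) x
  \<and> (x^2 - 1) * poly (pderiv (L (Suc n))) x = real (Suc n) * (x * poly (L (Suc n)) x - poly (L n) x)"
proof (induction n)
  case 0
  then show ?case by (simp add: power2_eq_square pderiv_pCons)
next
  case (Suc n)
  have I: "poly (pderiv (L (Suc (Suc n)))) x = x * poly (pderiv (L (Suc n))) x + (real n + 2) * poly (L (Suc n)) x"
  proof -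
    have e: "poly (pderiv (L n)) x = x * poly (pderiv (L (Suc n))) x - real (Suc n) * poly (L (Suc n)) x"
      using Suc.IH by simp
    have "(real n + 2) * poly (pderiv (L (Suc (Suc n)))) x =
      (real n + 2) * (x * poly (pderiv (L (Suc n))) x + (real n + 2) * poly (L (Suc n)) x)"
      unfolding leg_rec_d e by (simp add: algebra_simps)
    moreover have "real n + 2 \<noteq> 0" by simp
    ultimately show ?thesis by simp
  qed
  have R: "(real n + 2) * poly (L (Suc (Suc n))) x =
   (2 * real n + 3) * x * poly (L (Suc n)) x - (real n + 1) * poly (L n) x" by (rule leg_rec_pt)
  define a where "a = poly (L n) x"
  define b where "b = poly (L (Suc n)) x"
  define c where "c = poly (L (Suc (Suc n))) x"
  define b' where "b' = poly (pderiv (L (Suc n))) x"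
  define c' where "c' = poly (pderiv (L (Suc (Suc n)))) x"
  have I': "c' = x * b' + (real n + 2) * b" using I unfolding c'_def b'_def b_def .
  have III: "(x^2 - 1) * b' = (real n + 1) * (x * b - a)" using Suc.IH unfolding a_def b_def b'_def by simp
  have R': "(real n + 2) * c = (2 * real n + 3) * x * b - (real n + 1) * a" using R unfolding a_def b_def c_def .
  have G1: "x * c' - b' = (real n + 2) * c"
  proof -
    have "x * c' - b' = (x^2 - 1) * b' + (real n + 2) * x * b" unfolding I' by (simp add: algebra_simps power2_eq_square)
    also have "\<dots> = (real n + 1) * (x * b - a) + (real n + 2) * x * b" unfolding III ..
    also have "\<dots> = (2 * real n + 3) * x * b - (real n + 1) * a" by (simp add: algebra_simps)
    also have "\<dots> = (real n + 2) * c" using R' by simp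
    finally show ?thesis .
  qed
  have G2: "(x^2 - 1) * c' = (real n + 2) * (x * c - b)"
  proof -
    have "(x^2 - 1) * c' = x * ((x^2 - 1) * b') + (real n + 2) * (x^2 - 1) * b" unfolding I' by (simp add: algebra_simps)
    also have "\<dots> = x * ((real n + 1) * (x * b - a)) + (real n + 2) * (x^2 - 1) * b" unfolding III ..
    also have "\<dots> = x * ((2 * real n + 3) * x * b - (real n + 1) * a) - (real n + 2) * b" by (simp add: algebra_simps power2_eq_square)
    also have "\<dots> = x * ((real n + 2) * c) - (real n + 2) * b" using R' by simp
    also have "\<dots> = (real n + 2) * (x * c - b)" by (simp add: algebra_simps)
    finally show ?thesis .
  qed
  show ?case using G1 G2 unfolding a_def b_def c_def b'_def c'_def by (simp add: add.commute)
qed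

lemma leg_I: "poly (pderiv (L (Suc (Suc n)))) x = x * poly (pderiv (L (Suc n))) x + (real n + 2) * poly (L (Suc n)) x"
proof -
  have e: "poly (pderiv (L n)) x = x * poly (pderiv (L (Suc n))) x - real (Suc n) * poly (L (Suc n)) x"
    using leg_II_III[where n=n and x=x] by simp
  have "(real n + 2) * poly (pderiv (L (Suc (Suc n)))) x =
    (real n + 2) * (x * poly (pderiv (L (Suc n))) x + (real n + 2) * poly (L (Suc n)) x)"
    unfolding leg_rec_d e by (simp add: algebra_simps)
  moreover have "real n + 2 \<noteq> 0" by simp
  ultimately show ?thesis by simp
qed

lemma leg_deriv: "pderiv (L (Suc (Suc n))) = pderiv (L n) + smult (2 * real n + 3) (L (Suc n))"
proof -
  have "poly (pderiv (L (Suc (Suc n)))) x = poly (pderiv (L n) + smult (2 * real n + 3) (L (Suc n))) x" for x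
  proof -
    have e: "poly (pderiv (L n)) x = x * poly (pderiv (L (Suc n))) x - real (Suc n) * poly (L (Suc n)) x"
      using leg_II_III[where n=n and x=x] by simp
    show ?thesis unfolding leg_I by (simp add: e algebra_simps)
  qed
  then show ?thesis using poly_eq_poly_eq_iff by blast
qed

lemma pderiv_L1: "pderiv (L (Suc 0)) = 1" by (simp add: pderiv_pCons)

lemma prim_L0: "prim (L 0) = L 1 + L 0"
  by (rule prim_eqI) (simp_all add: pderiv_add pderiv_pCons)

lemma prim_LS: "prim (L (Suc n)) = smult (1 / (2 * real n + 3)) (L (Suc (Suc n)) - L n)"
proof (rule prim_eqI)
  have "2 * real n + 3 \<noteq> 0" by simp
  then show "pderiv (smult (1 / (2 * real n + 3)) (L (Suc (Suc n)) - L n)) = L (Suc n)"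
    by (simp add: pderiv_smult pderiv_diff leg_deriv)
  show "poly (smult (1 / (2 * real n + 3)) (L (Suc (Suc n)) - L n)) (- 1) = 0"
    by (simp add: leg_mone)
qed

lemma prim_LS_one: "poly (prim (L (Suc n))) 1 = 0"
  by (simp add: prim_LS leg_one)

definition cf :: "nat \<Rightarrow> nat \<Rightarrow> real" where
  "cf n k = (\<Prod>i<k. (real n - real i) * (real n + real i + 1) / (2 * (real i + 1)))"

lemma cf_0 [simp]: "cf n 0 = 1" by (simp add: cf_def)
lemma cf_Suc: "cf n (Suc k) = cf n k * ((real n - real k) * (real n + real k + 1) / (2 * (real k + 1)))"
  by (simp add: cf_def)

lemma cf_shift: "2 * (real k + 1) * cf n (Suc k) = cf (Suc n) k * (real n + 1 - real k) * (real n - real k)"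
proof (induction k)
  case 0
  then show ?case by (simp add: cf_Suc algebra_simps)
next
  case (Suc k)
  have "2 * (real (Suc k) + 1) * cf n (Suc (Suc k)) = cf n (Suc k) * ((real n - real k - 1) * (real n + real k + 2))"
    unfolding cf_Suc[of n "Suc k"] by (simp add: field_simps)
  also have "cf n (Suc k) = cf (Suc n) k * (real n + 1 - real k) * (real n - real k) / (2 * (real k + 1))"
    using Suc.IH by (simp add: field_simps)
  finally show ?case unfolding cf_Suc[of _ k] by (simp add: field_simps)
qed

lemma cf_diag: "2 * (real k + 1) * cf (Suc m) (Suc k) = cf m k * (real m + real k + 1) * (real m + real k + 2)"
proof (induction k)
  case 0
  then show ?case by (simp add: cf_Suc algebra_simps)
next
  case (Suc k)
  have "2 * (real (Suc k) + 1) * cf (Suc m) (Suc (Suc k)) = cf (Suc m) (Suc k) * ((real m - real k) * (real m + real k + 3))"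
    unfolding cf_Suc[of "Suc m" "Suc k"] by (simp add: field_simps)
  also have "cf (Suc m) (Suc k) = cf m k * (real m + real k + 1) * (real m + real k + 2) / (2 * (real k + 1))"
    using Suc.IH by (simp add: field_simps)
  finally show ?case unfolding cf_Suc[of _ k] by (simp add: field_simps)
qed

lemma cf_rec: "cf (Suc (Suc n)) (Suc k) = (2 * real n + 3) * cf (Suc n) k + cf n (Suc k)"
proof -
  have a: "cf (Suc (Suc n)) (Suc k) = cf (Suc n) k * (real n + real k + 2) * (real n + real k + 3) / (2 * (real k + 1))"
    using cf_diag[of k "Suc n"] by (simp add: field_simps)
  have b: "cf n (Suc k) = cf (Suc n) k * (real n + 1 - real k) * (real n - real k) / (2 * (real k + 1))"
    using cf_shift[of k n] by (simp add: field_simps)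
  show ?thesis unfolding a b by (simp add: field_simps)
qed

lemma cf_0_Suc: "cf 0 (Suc k) = 0"
  by (induction k) (simp_all add: cf_Suc)

lemma cf_1_SS: "cf (Suc 0) (Suc (Suc k)) = 0"
  by (induction k) (simp_all add: cf_Suc)

lemma cf_1_1: "cf (Suc 0) (Suc 0) = 1" by (simp add: cf_def)

fun bes :: "nat \<Rightarrow> real poly" where
  "bes 0 = 1"
| "bes (Suc 0) = [:1, 1:]"
| "bes (Suc (Suc n)) = smult (2 * real n + 3) ([:0, 1:] * bes (Suc n)) + bes n"

lemma coeff_bes: "coeff (bes n) k = cf n k"
proof (induction n arbitrary: k rule: bes.induct)
  case 1
  then show ?case by (cases k) (simp_all add: cf_0_Suc)
next
  case 2
  then show ?case
    by (cases k; cases "k - 1") (auto simp: cf_1_1 cf_1_SS coeff_pCons simp del: One_nat_def)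
next
  case (3 n)
  then show ?case
    by (cases k) (simp_all add: coeff_pCons cf_rec)
qed

lemma legD: "poly ((pderiv ^^ k) (L n)) 1 = cf n k \<and> poly ((pderiv ^^ k) (L n)) (-1) = (-1)^(n+k) * cf n k"
proof (induction n arbitrary: k rule: legendre.induct)
  case 1
  then show ?case by (cases k) (simp_all add: cf_0_Suc funpow_Suc_right del: funpow.simps)
next
  case 2
  show ?case
  proof (cases k)
    case 0 then show ?thesis by simp
  next
    case (Suc j)
    then show ?thesis
      by (cases j) (simp_all add: cf_1_1 cf_1_SS funpow_Suc_right pderiv_pCons del: funpow.simps)
  qed
next
  case (3 n)
  show ?case
  proof (cases k)
    case 0 then show ?thesis by (simp add: leg_one leg_mone)
  next
    case (Suc j)
    have e: "(pderiv ^^ Suc j) (L (Suc (Suc n))) = (pderiv ^^ Suc j) (L n) + smult (2 * real n + 3) ((pderiv ^^ j) (L (Suc n)))"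
      by (simp only: funpow_Suc_right o_apply leg_deriv higher_pderiv_add higher_pderiv_smult)
    show ?thesis using "3.IH"(1)[of j] "3.IH"(2)[of "Suc j"]
      unfolding Suc e by (simp add: cf_rec algebra_simps)
  qed
qed

lemma legD1: "poly ((pderiv ^^ k) (L n)) 1 = cf n k" using legD by blast
lemma legDm1: "poly ((pderiv ^^ k) (L n)) (-1) = (-1)^(n+k) * cf n k" using legD by blast

lemma bes_W: "poly (bes (Suc n)) s * poly (bes n) (-s) + poly (bes (Suc n)) (-s) * poly (bes n) s = 2"
proof (induction n)
  case 0
  then show ?case by simp
next
  case (Suc n)
  then show ?case by (simp add: algebra_simps)
qed

lemma cf_alt_sum:
  assumes "0 < m" "even m"
  shows "(\<Sum>i\<le>m. (-1)^i * cf (Suc p) i * cf p (m - i)) = 0"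
proof -
  define nb where "nb n = pcompose (bes n) [:0, -1:]" for n
  have pnb: "poly (nb n) s = poly (bes n) (-s)" for n s by (simp add: nb_def poly_pcompose)
  have cnb: "coeff (nb n) i = (-1)^i * cf n i" for n i by (simp add: nb_def coeff_pcompose_linear coeff_bes)
  have "bes (Suc p) * nb p + nb (Suc p) * bes p = [:2:]"
  proof -
    have "poly (bes (Suc p) * nb p + nb (Suc p) * bes p) s = poly [:2:] s" for s
      using bes_W[of p s] by (simp add: pnb)
    then show ?thesis using poly_eq_poly_eq_iff by blast
  qed
  then have "coeff (bes (Suc p) * nb p + nb (Suc p) * bes p) m = 0"
    using assms(1) by (simp add: coeff_pCons split: nat.splits)
  then have "(\<Sum>i\<le>m. cf (Suc p) i * ((-1)^(m-i) * cf p (m - i))) + (\<Sum>i\<le>m. (-1)^i * cf (Suc p) i * cf p (m - i)) = 0"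
    by (simp add: coeff_mult cnb coeff_bes)
  moreover have "(\<Sum>i\<le>m. cf (Suc p) i * ((-1)^(m-i) * cf p (m - i))) = (\<Sum>i\<le>m. (-1)^i * cf (Suc p) i * cf p (m - i))"
  proof (rule sum.cong)
    fix i assume "i \<in> {..m}"
    then have "i \<le> m" by simp
    then have "(-1::real)^(m-i) = (-1)^i"
      using assms(2) by (metis (no_types, lifting) add_diff_cancel_left' even_add le_add_diff_inverse neg_one_even_power neg_one_odd_power)
    then show "cf (Suc p) i * ((-1)^(m-i) * cf p (m - i)) = (-1)^i * cf (Suc p) i * cf p (m - i)" by simp
  qed simp
  ultimately show ?thesis by simp
qed

definition Acf :: "nat \<Rightarrow> nat \<Rightarrow> real" where "Acf p k = (-1)^k * cf (Suc p) k / 2"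
definition Bcf :: "nat \<Rightarrow> nat \<Rightarrow> real" where "Bcf p k = (-1)^k * cf p k / 2"
definition Qc :: "nat \<Rightarrow> nat \<Rightarrow> real poly" where
  "Qc p \<nu> = (\<Sum>k\<le>\<nu>. smult (Acf p k) (psi p k) + smult (Bcf p k) (psi (Suc p) k))"

lemma psiD: "k \<le> m \<Longrightarrow> (pderiv ^^ m) (psi i k) = (pderiv ^^ (m - k)) (L i)"
proof (induction k arbitrary: m)
  case 0
  then show ?case by simp
next
  case (Suc k)
  then obtain m' where m: "m = Suc m'" by (cases m) auto
  have "(pderiv ^^ m) (psi i (Suc k)) = (pderiv ^^ m') (psi i k)"
    unfolding m by (simp only: funpow_Suc_right o_apply psi.simps pderiv_prim)
  also have "\<dots> = (pderiv ^^ (m' - k)) (L i)" using Suc m by simp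
  finally show ?case using m by simp
qed

lemma sum_reflect: "(\<Sum>k\<le>n. f k) = (\<Sum>k\<le>n. f (n - k :: nat))"
  by (rule sum.reindex_bij_witness[where i="\<lambda>k. n-k" and j="\<lambda>k. n-k"]) auto

lemma sign_split: "k \<le> n \<Longrightarrow> (-1::real)^k * (-1)^(n-k) = (-1)^n"
  by (simp add: power_add[symmetric])

lemma sign_split2: "k \<le> n \<Longrightarrow> (-1::real)^(n-k) = (-1)^n * (-1)^k"
proof -
  assume kn: "k \<le> n"
  have e: "(-1::real)^k * (-1)^k = 1" by (simp flip: power_mult_distrib)
  have "(-1::real)^n * (-1)^k = (-1)^(n-k) * ((-1)^k * (-1)^k)"
    using sign_split[OF kn] by (metis mult.assoc mult.commute)
  then show ?thesis using e by simp
qed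

lemma Qc_D: "poly ((pderiv ^^ Suc \<nu>) (Qc p \<nu>)) x =
  (\<Sum>k\<le>\<nu>. Acf p k * poly ((pderiv ^^ (Suc \<nu> - k)) (L p)) x + Bcf p k * poly ((pderiv ^^ (Suc \<nu> - k)) (L (Suc p))) x)"
  unfolding Qc_def higher_pderiv_sum higher_pderiv_add higher_pderiv_smult poly_sum
  by (intro sum.cong refl) (simp add: psiD del: funpow.simps)

lemma ab_formula:
  fixes p \<nu> :: nat
  defines "d \<equiv> (pderiv ^^ Suc \<nu>) (Qc p \<nu>)"
  shows "- (poly d 1 + (-1) ^ p * poly d (-1)) / 2 = Acf p (Suc \<nu>)"
    and "- (poly d 1 - (-1) ^ p * poly d (-1)) / 2 = Bcf p (Suc \<nu>)"
proof -
  define n where "n = Suc \<nu>"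
  define X where "X k = cf (Suc p) k" for k
  define Y where "Y k = cf p k" for k
  define U where "U = (\<Sum>k\<le>n. (-1)^k * X k * Y (n - k))"
  define U' where "U' = (\<Sum>k\<le>n. (-1)^k * Y k * X (n - k))"
  define T where "T = (\<Sum>k\<le>n. X k * Y (n - k))"
  define T' where "T' = (\<Sum>k\<le>n. Y k * X (n - k))"
  have TT: "T' = T" unfolding T_def T'_def by (subst sum_reflect) (simp add: mult.commute)
  have UU: "U' = (-1)^n * U"
  proof -
    have "U' = (\<Sum>k\<le>n. (-1)^(n-k) * Y (n-k) * X k)" unfolding U'_def by (subst sum_reflect) simp
    also have "\<dots> = (\<Sum>k\<le>n. (-1)^n * ((-1)^k * X k * Y (n - k)))"
    proof (rule sum.cong)
      fix k assume "k \<in> {..n}"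
      then have "(-1::real)^(n-k) = (-1)^n * (-1)^k"
        using sign_split2[of k n] by simp
      then show "(-1)^(n-k) * Y (n-k) * X k = (-1)^n * ((-1)^k * X k * Y (n - k))" by simp
    qed simp
    finally show ?thesis unfolding U_def by (simp add: sum_distrib_left)
  qed
  have U0: "U + U' = 0"
  proof (cases "even n")
    case True
    then have "U = 0" unfolding U_def X_def Y_def using cf_alt_sum[of n p] n_def by simp
    then show ?thesis using UU by simp
  next
    case False
    then show ?thesis using UU by simp
  qed
  have d1: "poly d 1 = (U + U' - (-1)^n * (X n + Y n)) / 2"
  proof -
    have "poly d 1 = (\<Sum>k\<le>\<nu>. ((-1)^k * X k * Y (n - k) + (-1)^k * Y k * X (n - k)) / 2)"
      unfolding d_def Qc_D legD1 Acf_def Bcf_def X_def Y_def n_def by (intro sum.cong refl) (simp add: field_simps)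
    also have "\<dots> = ((\<Sum>k\<le>\<nu>. (-1)^k * X k * Y (n - k)) + (\<Sum>k\<le>\<nu>. (-1)^k * Y k * X (n - k))) / 2"
      by (simp add: sum_divide_distrib[symmetric] sum.distrib)
    also have "\<dots> = (U + U' - (-1)^n * (X n + Y n)) / 2"
      unfolding U_def U'_def n_def by (simp add: X_def Y_def algebra_simps)
    finally show ?thesis .
  qed
  have dm: "(-1)^p * poly d (-1) = (-1)^n * (T - T' - X n + Y n) / 2"
  proof -
    have "(-1)^p * poly d (-1) = (\<Sum>k\<le>\<nu>. (-1)^n * (X k * Y (n - k) - Y k * X (n - k)) / 2)"
      unfolding d_def Qc_D legDm1 sum_distrib_left
    proof (intro sum.cong refl)
      fix k assume "k \<in> {..\<nu>}"
      then have kn: "k \<le> n" unfolding n_def by simp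
      have s1: "(-1::real)^p * (-1)^k * (-1)^(p + (n - k)) = (-1)^n"
        using sign_split[OF kn] by (simp add: power_add algebra_simps)
      have s2: "(-1::real)^p * (-1)^k * (-1)^(Suc p + (n - k)) = -((-1::real)^n)"
        using s1 by simp
      have "(-1) ^ p * (Acf p k * ((-1) ^ (p + (n - k)) * cf p (n - k)) +
            Bcf p k * ((-1) ^ (Suc p + (n - k)) * cf (Suc p) (n - k))) =
            X k * Y (n - k) / 2 * ((-1::real)^p * (-1)^k * (-1)^(p + (n - k)))
          + Y k * X (n - k) / 2 * ((-1::real)^p * (-1)^k * (-1)^(Suc p + (n - k)))"
        unfolding Acf_def Bcf_def X_def Y_def by (simp add: field_simps)
      also have "\<dots> = (-1) ^ n * (X k * Y (n - k) - Y k * X (n - k)) / 2"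
        unfolding s1 s2 by (simp add: algebra_simps)
      finally show "(-1) ^ p * (Acf p k * ((-1) ^ (p + (Suc \<nu> - k)) * cf p (Suc \<nu> - k)) +
            Bcf p k * ((-1) ^ (Suc p + (Suc \<nu> - k)) * cf (Suc p) (Suc \<nu> - k))) =
           (-1) ^ n * (X k * Y (n - k) - Y k * X (n - k)) / 2"
        unfolding n_def .
    qed
    also have "\<dots> = (-1)^n * ((\<Sum>k\<le>\<nu>. X k * Y (n - k)) - (\<Sum>k\<le>\<nu>. Y k * X (n - k))) / 2"
      by (simp add: sum_divide_distrib[symmetric] sum_distrib_left[symmetric] sum_subtractf)
    also have "\<dots> = (-1)^n * (T - T' - X n + Y n) / 2"
      unfolding T_def T'_def n_def by (simp add: X_def Y_def algebra_simps)
    finally show ?thesis .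
  qed
  show "- (poly d 1 + (-1) ^ p * poly d (-1)) / 2 = Acf p (Suc \<nu>)"
    unfolding d1 dm TT using U0 unfolding Acf_def X_def n_def by (simp add: field_simps)
  show "- (poly d 1 - (-1) ^ p * poly d (-1)) / 2 = Bcf p (Suc \<nu>)"
    unfolding d1 dm TT using U0 unfolding Bcf_def Y_def n_def by (simp add: field_simps)
qed

lemma qpol_closed: "qpol p \<nu> = Qc p \<nu>"
proof (induction \<nu>)
  case 0
  then show ?case by (simp add: Qc_def Acf_def Bcf_def smult_add_right)
next
  case (Suc \<nu>)
  have "qpol p (Suc \<nu>) = Qc p \<nu> + smult (Acf p (Suc \<nu>)) (psi p (Suc \<nu>)) + smult (Bcf p (Suc \<nu>)) (psi (Suc p) (Suc \<nu>))"
    using ab_formula[of \<nu> p] by (simp only: qpol.simps Let_def Suc.IH) simp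
  also have "\<dots> = Qc p (Suc \<nu>)" by (simp add: Qc_def add.assoc)
  finally show ?case .
qed

definition J :: "real poly \<Rightarrow> real" where "J f = poly (prim f) 1"

lemma J_add: "J (f + g) = J f + J g" by (simp add: J_def prim_add)
lemma J_diff: "J (f - g) = J f - J g" by (simp add: J_def prim_diff)
lemma J_smult: "J (smult c f) = c * J f" by (simp add: J_def prim_smult)
lemma J_pderiv: "J (pderiv h) = poly h 1 - poly h (-1)" by (simp add: J_def prim_pderiv)
lemma J_0 [simp]: "J 0 = 0"
  using J_smult[of 0 0] by simp

lemma J_parts: "J (pderiv F * s) = poly F 1 * poly s 1 - poly F (-1) * poly s (-1) - J (F * pderiv s)"
proof -
  have "pderiv F * s = pderiv (F * s) - F * pderiv s" by (simp add: pderiv_mult algebra_simps)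
  then show ?thesis by (simp add: J_diff J_pderiv)
qed

lemma L2sq_J: "L2sq f = J (f * f)"
proof -
  have "((\<lambda>x. (poly f x)\<^sup>2) has_integral (poly (prim (f * f)) 1 - poly (prim (f * f)) (-1))) {-1..1}"
  proof (rule fundamental_theorem_of_calculus)
    fix x :: real
    have "(poly (prim (f * f)) has_real_derivative poly (pderiv (prim (f * f))) x) (at x within {-1..1})"
      by (rule DERIV_subset[OF poly_DERIV]) simp
    then show "(poly (prim (f * f)) has_vector_derivative (poly f x)\<^sup>2) (at x within {- 1..1})"
      by (simp add: has_real_derivative_iff_has_vector_derivative power2_eq_square)
  qed simp
  then show ?thesis unfolding L2sq_def J_def by (simp add: integral_unique)
qed

lemma J_sq_nonneg: "0 \<le> J (f * f)"
proof -
  have "((\<lambda>x. (poly f x)\<^sup>2) has_integral (poly (prim (f * f)) 1 - poly (prim (f * f)) (-1))) {-1..1}"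
  proof (rule fundamental_theorem_of_calculus)
    fix x :: real
    have "(poly (prim (f * f)) has_real_derivative poly (pderiv (prim (f * f))) x) (at x within {-1..1})"
      by (rule DERIV_subset[OF poly_DERIV]) simp
    then show "(poly (prim (f * f)) has_vector_derivative (poly f x)\<^sup>2) (at x within {- 1..1})"
      by (simp add: has_real_derivative_iff_has_vector_derivative power2_eq_square)
  qed simp
  then have "0 \<le> poly (prim (f * f)) 1 - poly (prim (f * f)) (-1)"
    by (rule has_integral_nonneg) simp
  then show ?thesis unfolding J_def by simp
qed

lemma degree_L: "degree (L n) \<le> n"
proof (induction n rule: legendre.induct)
  case (3 n)
  have "degree ([:0, 1:] * L (Suc n)) \<le> Suc (Suc n)"
    using degree_mult_le[of "[:0,1::real:]" "L (Suc n)"] 3(1) by simp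
  then have d1: "degree (smult (2 * real n + 3) ([:0, 1:] * L (Suc n))) \<le> Suc (Suc n)"
    using degree_smult_le order.trans by blast
  have d2: "degree (smult (real n + 1) (L n)) \<le> Suc (Suc n)"
    using 3(2) degree_smult_le order.trans by (metis le_SucI)
  have "degree (smult (2 * real n + 3) ([:0, 1:] * L (Suc n)) - smult (real n + 1) (L n)) \<le> Suc (Suc n)"
    by (rule degree_diff_le[OF d1 d2])
  then show ?case unfolding legendre.simps(3) using degree_smult_le order.trans by blast
qed auto

lemma J_smult_mult: "J (smult c A * s) = c * J (A * s)"
  by (simp add: J_smult)

lemma orth: "degree s \<le> j \<Longrightarrow> j < n \<Longrightarrow> J (L n * s) = 0"
proof (induction j arbitrary: n s)
  case (0 n s)
  then obtain m where n: "n = Suc m" by (cases n) auto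
  have "pderiv s = 0" using 0 by (simp add: pderiv_eq_0_iff)
  have "J (L n * s) = J (pderiv (prim (L n)) * s)" by simp
  also have "\<dots> = 0" unfolding J_parts n using \<open>pderiv s = 0\<close> by (simp add: prim_LS_one)
  finally show ?case .
next
  case (Suc j n s)
  then obtain m where n: "n = Suc m" by (cases n) auto
  have ds: "degree (pderiv s) \<le> j" using Suc.prems by (simp add: degree_pderiv)
  have "J (L n * s) = J (pderiv (prim (L n)) * s)" by simp
  also have "\<dots> = - J (prim (L (Suc m)) * pderiv s)" unfolding J_parts n by (simp add: prim_LS_one)
  also have "\<dots> = - (1 / (2 * real m + 3)) * (J (L (Suc (Suc m)) * pderiv s) - J (L m * pderiv s))"
    by (simp add: prim_LS J_smult J_diff algebra_simps)
  also have "\<dots> = 0"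
    using Suc.IH[OF ds, of "Suc (Suc m)"] Suc.IH[OF ds, of m] Suc.prems n by simp
  finally show ?case .
qed

lemma leg_rec_poly: "smult (real n + 2) (L (Suc (Suc n))) = smult (2 * real n + 3) ([:0, 1:] * L (Suc n)) - smult (real n + 1) (L n)"
proof -
  have "real n + 2 \<noteq> 0" by simp
  then show ?thesis unfolding legendre.simps(3) by simp
qed

lemma J_x_adj: "J ([:0, 1:] * L (Suc n) * L n) = (real n + 1) / (2 * real n + 3) * J (L n * L n)"
proof -
  have o: "J (L (Suc (Suc n)) * L n) = 0" by (rule orth[of _ n]) (simp_all add: degree_L)
  have "(real n + 2) * J (L (Suc (Suc n)) * L n) =
     (2 * real n + 3) * J ([:0, 1:] * L (Suc n) * L n) - (real n + 1) * J (L n * L n)"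
  proof -
    have "(real n + 2) * J (L (Suc (Suc n)) * L n) = J (smult (real n + 2) (L (Suc (Suc n))) * L n)"
      by (simp add: J_smult)
    also have "\<dots> = (2 * real n + 3) * J ([:0, 1:] * L (Suc n) * L n) - (real n + 1) * J (L n * L n)"
      unfolding leg_rec_poly by (simp only: left_diff_distrib mult_smult_left J_diff J_smult)
    finally show ?thesis .
  qed
  then have "(2 * real n + 3) * J ([:0, 1:] * L (Suc n) * L n) = (real n + 1) * J (L n * L n)"
    using o by simp
  then show ?thesis by (simp add: field_simps)
qed

lemma J_LL: "J (L n * L n) = 2 / (2 * real n + 1)"
proof (induction n rule: legendre.induct)
  case 1
  have "prim (L 0 * L 0) = [:1, 1:]" by (rule prim_eqI) (simp_all add: pderiv_pCons)
  then show ?case by (simp add: J_def)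
next
  case 2
  have "prim (L 1 * L 1) = [:1/3, 0, 0, 1/3:]" by (rule prim_eqI) (simp_all add: pderiv_pCons)
  then show ?case by (simp add: J_def)
next
  case (3 n)
  have o': "J (L (Suc (Suc n)) * L n) = 0" by (rule orth[of _ n]) (simp_all add: degree_L)
  then have o: "J (L n * L (Suc (Suc n))) = 0" by (simp add: mult.commute)
  have "(real n + 2) * J (L (Suc (Suc n)) * L (Suc (Suc n))) =
     (2 * real n + 3) * J ([:0, 1:] * L (Suc n) * L (Suc (Suc n))) - (real n + 1) * J (L n * L (Suc (Suc n)))"
  proof -
    have "(real n + 2) * J (L (Suc (Suc n)) * L (Suc (Suc n))) = J (smult (real n + 2) (L (Suc (Suc n))) * L (Suc (Suc n)))"
      by (simp add: J_smult)
    also have "\<dots> = (2 * real n + 3) * J ([:0, 1:] * L (Suc n) * L (Suc (Suc n))) - (real n + 1) * J (L n * L (Suc (Suc n)))"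
      unfolding leg_rec_poly by (simp only: left_diff_distrib mult_smult_left J_diff J_smult)
    finally show ?thesis .
  qed
  also have "J ([:0, 1:] * L (Suc n) * L (Suc (Suc n))) = J ([:0, 1:] * L (Suc (Suc n)) * L (Suc n))"
    by (simp add: mult_ac)
  also have "\<dots> = (real n + 2) / (2 * real n + 5) * (2 / (2 * real n + 3))"
    using J_x_adj[of "Suc n"] "3.IH"(1) by (simp add: field_simps)
  finally have e: "(real n + 2) * J (L (Suc (Suc n)) * L (Suc (Suc n))) =
     (2 * real n + 3) * ((real n + 2) / (2 * real n + 5) * (2 / (2 * real n + 3))) - (real n + 1) * J (L n * L (Suc (Suc n)))" .
  have h: "2 * real n + 3 \<noteq> 0" by simp
  have c: "(2 * real n + 3) * (2 / (2 * real n + 3)) = 2"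
    by (metis h nonzero_mult_div_cancel_left times_divide_eq_right)
  have "(2 * real n + 3) * ((real n + 2) / (2 * real n + 5) * (2 / (2 * real n + 3))) = (real n + 2) / (2 * real n + 5) * ((2 * real n + 3) * (2 / (2 * real n + 3)))"
    by (simp only: mult_ac)
  also have "\<dots> = (real n + 2) * (2 / (2 * real (Suc (Suc n)) + 1))"
    unfolding c by (simp add: algebra_simps)
  finally have "(2 * real n + 3) * ((real n + 2) / (2 * real n + 5) * (2 / (2 * real n + 3))) = (real n + 2) * (2 / (2 * real (Suc (Suc n)) + 1))" .
  then have "(real n + 2) * J (L (Suc (Suc n)) * L (Suc (Suc n))) = (real n + 2) * (2 / (2 * real (Suc (Suc n)) + 1))"
    using e o by simp
  moreover have "real n + 2 \<noteq> 0" by simp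
  ultimately show ?case using mult_left_cancel[of "real n + 2"] by blast
qed

definition Nm :: "real poly \<Rightarrow> real" where "Nm f = sqrt (J (f * f))"

lemma J_quad: "J ((f + smult t g) * (f + smult t g)) = J (f * f) + 2 * t * J (f * g) + t^2 * J (g * g)"
proof -
  have "(f + smult t g) * (f + smult t g) = f * f + smult t (f * g) + smult t (f * g) + smult (t^2) (g * g)"
    by (simp add: algebra_simps power2_eq_square mult_smult_right mult_smult_left)
  then show ?thesis by (simp only: J_add J_smult)
qed

lemma J_CS: "J (f * g) \<le> sqrt (J (f * f)) * sqrt (J (g * g))"
proof -
  define a where "a = J (g * g)"
  define b where "b = J (f * g)"
  define c where "c = J (f * f)"
  have q: "0 \<le> c + 2 * t * b + t^2 * a" for t
    using J_sq_nonneg[of "f + smult t g"] unfolding J_quad a_def b_def c_def .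
  have a0: "0 \<le> a" unfolding a_def by (rule J_sq_nonneg)
  have c0: "0 \<le> c" unfolding c_def by (rule J_sq_nonneg)
  show ?thesis
  proof (cases "a = 0")
    case True
    have "b \<le> 0"
    proof (rule ccontr)
      assume "\<not> b \<le> 0"
      then have bp: "b > 0" by simp
      have "0 \<le> c + 2 * (- (c + 1) / (2 * b)) * b" using q[of "- (c + 1) / (2 * b)"] True by simp
      also have "\<dots> = -1" using bp by (simp add: field_simps)
      finally show False by simp
    qed
    then show ?thesis unfolding b_def[symmetric] a_def[symmetric] c_def[symmetric]
      using a0 c0 by (simp add: mult_nonneg_nonneg order.trans[of b 0])
  next
    case False
    then have ap: "a > 0" using a0 by simp
    have "0 \<le> c + 2 * (- b / a) * b + (- b / a)^2 * a" by (rule q)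
    also have "\<dots> = c - b^2 / a" using ap by (simp add: field_simps power2_eq_square)
    finally have "b^2 \<le> c * a" using ap by (simp add: field_simps)
    then have "b \<le> sqrt (c * a)" by (rule real_le_rsqrt)
    then show ?thesis unfolding a_def b_def c_def by (simp add: real_sqrt_mult)
  qed
qed

lemma Nm_nonneg: "0 \<le> Nm f" unfolding Nm_def by (rule real_sqrt_ge_zero[OF J_sq_nonneg])

lemma Nm_add: "Nm (f + g) \<le> Nm f + Nm g"
proof -
  have "J ((f + g) * (f + g)) = J (f * f) + 2 * J (f * g) + J (g * g)"
    using J_quad[of f 1 g] by simp
  also have "\<dots> \<le> J (f * f) + 2 * (sqrt (J (f * f)) * sqrt (J (g * g))) + J (g * g)"
    using J_CS[of f g] by simp
  also have "\<dots> = (Nm f + Nm g)^2"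
    unfolding Nm_def power2_sum real_sqrt_pow2[OF J_sq_nonneg] by simp
  finally show ?thesis unfolding Nm_def[of "f + g"]
    by (intro real_le_lsqrt add_nonneg_nonneg Nm_nonneg)
qed

lemma Nm_smult: "Nm (smult c f) = \<bar>c\<bar> * Nm f"
proof -
  have "J (smult c f * smult c f) = c^2 * J (f * f)" by (simp add: J_smult power2_eq_square mult_smult_right)
  then show ?thesis unfolding Nm_def by (simp add: real_sqrt_mult)
qed

lemma Nm_sum: "Nm (\<Sum>k\<in>A. f k) \<le> (\<Sum>k\<in>A. Nm (f k))"
proof (induction A rule: infinite_finite_induct)
  case (infinite A)
  then show ?case by (simp add: Nm_def)
next
  case empty
  then show ?case by (simp add: Nm_def)
next
  case (insert x F)
  then show ?case using Nm_add[of "f x" "sum f F"] by simp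
qed

lemma Nm_L: "Nm (L j) = sqrt (2 / (2 * real j + 1))"
  by (simp add: Nm_def J_LL)

inductive G :: "nat \<Rightarrow> real \<Rightarrow> real poly \<Rightarrow> bool" where
  Gb: "m \<le> j \<Longrightarrow> \<bar>c\<bar> \<le> \<beta> \<Longrightarrow> G m \<beta> (smult c (L j))"
| Ga: "G m \<beta>1 f \<Longrightarrow> G m \<beta>2 g \<Longrightarrow> G m (\<beta>1 + \<beta>2) (f + g)"

lemma G_nonneg: "G m \<beta> f \<Longrightarrow> 0 \<le> \<beta>"
  by (induction rule: G.induct) auto

lemma G_mono: "G m \<beta> f \<Longrightarrow> \<beta> \<le> \<beta>' \<Longrightarrow> G m \<beta>' f"
proof (induction arbitrary: \<beta>' rule: G.induct)
  case (Gb m j c \<beta>)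
  then show ?case by (intro G.Gb) auto
next
  case (Ga m \<beta>1 f \<beta>2 g)
  have "G m (\<beta>1 + (\<beta>' - \<beta>1)) (f + g)"
    by (rule G.Ga[OF Ga.IH(1) Ga.IH(2)]) (use Ga.prems in auto)
  then show ?case by simp
qed

lemma G_Nm: "G m \<beta> f \<Longrightarrow> Nm f \<le> \<beta> * sqrt (2 / (2 * real m + 1))"
proof (induction rule: G.induct)
  case (Gb m j c \<beta>)
  have "sqrt (2 / (2 * real j + 1)) \<le> sqrt (2 / (2 * real m + 1))"
    using Gb(1) by (simp add: frac_le)
  then show ?case unfolding Nm_smult Nm_L using Gb(2)
    by (intro mult_mono) auto
next
  case (Ga m \<beta>1 f \<beta>2 g)
  then show ?case using Nm_add[of f g] by (simp add: algebra_simps)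
qed

lemma prim_smult_L: "prim (smult c (L (Suc i))) = smult (c / (2 * real i + 3)) (L (Suc (Suc i))) + smult (- c / (2 * real i + 3)) (L i)"
  by (simp add: prim_smult prim_LS smult_diff_right)

lemma G_prim: "G m \<beta> f \<Longrightarrow> G (m - 1) (2 * \<beta> / (2 * real m + 1)) (prim f)"
proof (induction rule: G.induct)
  case (Gb m j c \<beta>)
  show ?case
  proof (cases j)
    case 0
    then have m0: "m = 0" using Gb by simp
    have "G 0 (\<bar>c\<bar> + \<bar>c\<bar>) (smult c (L 1) + smult c (L 0))"
      by (intro G.Ga G.Gb) auto
    then have "G 0 (2 * \<beta> / (2 * real m + 1)) (smult c (L 1) + smult c (L 0))"
      by (rule G_mono) (use Gb m0 in simp)
    moreover have "prim (smult c (L 0)) = smult c (L 1) + smult c (L 0)"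
      by (simp only: prim_smult prim_L0 smult_add_right)
    ultimately show ?thesis using 0 m0 by simp
  next
    case (Suc i)
    have "G (m - 1) (\<bar>c / (2 * real i + 3)\<bar> + \<bar>- c / (2 * real i + 3)\<bar>)
      (smult (c / (2 * real i + 3)) (L (Suc (Suc i))) + smult (- c / (2 * real i + 3)) (L i))"
      by (intro G.Ga G.Gb) (use Gb Suc in auto)
    moreover have "\<bar>c / (2 * real i + 3)\<bar> + \<bar>- c / (2 * real i + 3)\<bar> \<le> 2 * \<beta> / (2 * real m + 1)"
    proof -
      have "\<bar>c / (2 * real i + 3)\<bar> + \<bar>- c / (2 * real i + 3)\<bar> = 2 * \<bar>c\<bar> / (2 * real i + 3)"
        by (simp add: abs_divide)
      also have "\<dots> \<le> 2 * \<beta> / (2 * real m + 1)"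
        using Gb Suc by (intro frac_le) auto
      finally show ?thesis .
    qed
    ultimately show ?thesis using Suc by (simp add: prim_smult_L G_mono)
  qed
next
  case (Ga m \<beta>1 f \<beta>2 g)
  then show ?case using G.Ga[OF Ga.IH] by (simp add: prim_add add_divide_distrib)
qed

definition bp :: "nat \<Rightarrow> nat \<Rightarrow> real" where
  "bp i k = (\<Prod>t<k. 2 / (2 * real (i - t) + 1))"

lemma psi_G: "G (i - k) (bp i k) (psi i k)"
proof (induction k)
  case 0
  have "G i 1 (smult 1 (L i))" by (rule G.Gb) auto
  then show ?case by (simp add: bp_def)
next
  case (Suc k)
  have "G (i - k - 1) (2 * bp i k / (2 * real (i - k) + 1)) (prim (psi i k))"
    by (rule G_prim[OF Suc.IH])
  then show ?case by (simp add: bp_def mult.commute)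
qed

lemma Nm_psi: "Nm (psi i k) \<le> bp i k * sqrt (2 / (2 * real (i - k) + 1))"
  by (rule G_Nm[OF psi_G])

lemma Nm_qpol: "Nm (qpol p \<nu>) \<le> (\<Sum>k\<le>\<nu>. \<bar>Acf p k\<bar> * Nm (psi p k) + \<bar>Bcf p k\<bar> * Nm (psi (Suc p) k))"
proof -
  have "Nm (qpol p \<nu>) \<le> (\<Sum>k\<le>\<nu>. Nm (smult (Acf p k) (psi p k) + smult (Bcf p k) (psi (Suc p) k)))"
    unfolding qpol_closed Qc_def by (rule Nm_sum)
  also have "\<dots> \<le> (\<Sum>k\<le>\<nu>. \<bar>Acf p k\<bar> * Nm (psi p k) + \<bar>Bcf p k\<bar> * Nm (psi (Suc p) k))"
    by (intro sum_mono) (metis Nm_add Nm_smult)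
  finally show ?thesis .
qed

lemma cf_zero: "n < k \<Longrightarrow> cf n k = 0"
  unfolding cf_def by (subst prod_zero_iff) (auto intro!: bexI[of _ n])

lemma Zstep:
  fixes Z :: "nat \<Rightarrow> real"
  assumes "Z (Suc k) = Z k * r" "0 \<le> r" "r \<le> 4 * P / (real k + 1)" "0 \<le> Z k"
    "Z k \<le> (4 * P)^k / fact k" "0 \<le> P"
  shows "0 \<le> Z (Suc k) \<and> Z (Suc k) \<le> (4 * P)^(Suc k) / fact (Suc k)"
proof
  show "0 \<le> Z (Suc k)" using assms by simp
  have "Z (Suc k) \<le> (4 * P)^k / fact k * (4 * P / (real k + 1))"
    unfolding assms(1) using assms by (intro mult_mono) auto
  also have "\<dots> = (4 * P)^(Suc k) / fact (Suc k)"
    by (simp add: fact_Suc field_simps)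
  finally show "Z (Suc k) \<le> (4 * P)^(Suc k) / fact (Suc k)" .
qed

lemma Z1_bound:
  assumes p: "1 \<le> p"
  shows "0 \<le> \<bar>cf (Suc p) k\<bar> * bp p k \<and> \<bar>cf (Suc p) k\<bar> * bp p k \<le> (4 * real p)^k / fact k"
proof (induction k)
  case 0
  then show ?case by (simp add: bp_def)
next
  case (Suc k)
  show ?case
  proof (cases "k \<le> p")
    case False
    then have "cf (Suc p) (Suc k) = 0" by (intro cf_zero) simp
    then show ?thesis by simp
  next
    case True
    define a where "a = real p"
    define b where "b = real k"
    have ba: "b \<le> a" and a1: "1 \<le> a" and b0: "0 \<le> b" using True p by (auto simp: a_def b_def)
    have pk: "real (p - k) = a - b" using True by (simp add: a_def b_def of_nat_diff)
    define r where "r = ((a + 1 - b) / (2 * (a - b) + 1)) * ((a + b + 2) / (b + 1))"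
    have r0: "0 \<le> r" unfolding r_def using ba b0 by (intro mult_nonneg_nonneg divide_nonneg_pos) auto
    have r1: "(a + 1 - b) / (2 * (a - b) + 1) \<le> 1" using ba by simp
    have r2: "(a + b + 2) / (b + 1) \<le> 4 * a / (b + 1)" using ba a1 b0 by (intro divide_right_mono) auto
    have rle: "r \<le> 4 * a / (b + 1)"
    proof -
      have "r \<le> 1 * (4 * a / (b + 1))" unfolding r_def
        using r1 r2 ba b0 a1 by (intro mult_mono) auto
      then show ?thesis by simp
    qed
    have cfS: "cf (Suc p) (Suc k) = cf (Suc p) k * ((a + 1 - b) * (a + b + 2) / (2 * (b + 1)))"
      unfolding cf_Suc a_def b_def by (simp add: algebra_simps)
    have fac0: "0 \<le> (a + 1 - b) * (a + b + 2) / (2 * (b + 1))" using ba b0 by simp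
    have bpS: "bp p (Suc k) = bp p k * (2 / (2 * (a - b) + 1))"
      unfolding bp_def by (simp add: pk)
    have nz1: "2 * (a - b) + 1 \<noteq> 0" "b + 1 \<noteq> 0" using ba b0 by auto
    have fr: "(a + 1 - b) * (a + b + 2) / (2 * (b + 1)) * (2 / (2 * (a - b) + 1)) = r"
    proof -
      have "(a + 1 - b) * (a + b + 2) / (2 * (b + 1)) * (2 / (2 * (a - b) + 1))
        = (2 * ((a + 1 - b) * (a + b + 2))) / (2 * ((b + 1) * (2 * (a - b) + 1)))"
        by (simp only: times_divide_times_eq mult_ac)
      also have "\<dots> = ((a + 1 - b) * (a + b + 2)) / ((b + 1) * (2 * (a - b) + 1))"
        by (rule mult_divide_mult_cancel_left) simp
      also have "\<dots> = r" unfolding r_def by (simp only: times_divide_times_eq mult_ac)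
      finally show ?thesis .
    qed
    have eq: "\<bar>cf (Suc p) (Suc k)\<bar> * bp p (Suc k) = (\<bar>cf (Suc p) k\<bar> * bp p k) * r"
      unfolding cfS bpS abs_mult abs_of_nonneg[OF fac0] fr[symmetric] by (simp only: mult_ac)
    show ?thesis
      using Zstep[where Z="\<lambda>k. \<bar>cf (Suc p) k\<bar> * bp p k" and k=k and r=r and P="real p", OF eq r0]
        rle Suc.IH unfolding a_def b_def by simp
  qed
qed

lemma Z2_bound:
  assumes p: "1 \<le> p"
  shows "0 \<le> \<bar>cf p k\<bar> * bp (Suc p) k \<and> \<bar>cf p k\<bar> * bp (Suc p) k \<le> (4 * real p)^k / fact k"
proof (induction k)
  case 0
  then show ?case by (simp add: bp_def)
next
  case (Suc k)
  show ?case
  proof (cases "k \<le> p")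
    case False
    then have "cf p (Suc k) = 0" by (intro cf_zero) simp
    then show ?thesis by simp
  next
    case True
    define a where "a = real p"
    define b where "b = real k"
    have ba: "b \<le> a" and a1: "1 \<le> a" and b0: "0 \<le> b" using True p by (auto simp: a_def b_def)
    have pk: "real (Suc p - k) = a - b + 1" using True by (simp add: a_def b_def of_nat_diff)
    define r where "r = ((a - b) / (2 * (a - b) + 3)) * ((a + b + 1) / (b + 1))"
    have r0: "0 \<le> r" unfolding r_def using ba b0 by (intro mult_nonneg_nonneg divide_nonneg_pos) auto
    have r1: "(a - b) / (2 * (a - b) + 3) \<le> 1" using ba by simp
    have r2: "(a + b + 1) / (b + 1) \<le> 4 * a / (b + 1)" using ba a1 b0 by (intro divide_right_mono) auto
    have rle: "r \<le> 4 * a / (b + 1)"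
    proof -
      have "r \<le> 1 * (4 * a / (b + 1))" unfolding r_def
        using r1 r2 ba b0 a1 by (intro mult_mono) auto
      then show ?thesis by simp
    qed
    have cfS: "cf p (Suc k) = cf p k * ((a - b) * (a + b + 1) / (2 * (b + 1)))"
      unfolding cf_Suc a_def b_def by (simp add: algebra_simps)
    have fac0: "0 \<le> (a - b) * (a + b + 1) / (2 * (b + 1))" using ba b0 by simp
    have bpS: "bp (Suc p) (Suc k) = bp (Suc p) k * (2 / (2 * (a - b) + 3))"
      unfolding bp_def by (simp add: pk algebra_simps)
    have nz1: "2 * (a - b) + 3 \<noteq> 0" "b + 1 \<noteq> 0" using ba b0 by auto
    have fr: "(a - b) * (a + b + 1) / (2 * (b + 1)) * (2 / (2 * (a - b) + 3)) = r"
    proof -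
      have "(a - b) * (a + b + 1) / (2 * (b + 1)) * (2 / (2 * (a - b) + 3))
        = (2 * ((a - b) * (a + b + 1))) / (2 * ((b + 1) * (2 * (a - b) + 3)))"
        by (simp only: times_divide_times_eq mult_ac)
      also have "\<dots> = ((a - b) * (a + b + 1)) / ((b + 1) * (2 * (a - b) + 3))"
        by (rule mult_divide_mult_cancel_left) simp
      also have "\<dots> = r" unfolding r_def by (simp only: times_divide_times_eq mult_ac)
      finally show ?thesis .
    qed
    have eq: "\<bar>cf p (Suc k)\<bar> * bp (Suc p) (Suc k) = (\<bar>cf p k\<bar> * bp (Suc p) k) * r"
      unfolding cfS bpS abs_mult abs_of_nonneg[OF fac0] fr[symmetric] by (simp only: mult_ac)
    show ?thesis
      using Zstep[where Z="\<lambda>k. \<bar>cf p k\<bar> * bp (Suc p) k" and k=k and r=r and P="real p", OF eq r0]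
        rle Suc.IH unfolding a_def b_def by simp
  qed
qed

lemma term_bound:
  assumes p: "1 \<le> p" and k: "k \<le> \<nu>"
  shows "(4 * real p)^k * sqrt (2 / (2 * real (p - k) + 1)) \<le> 2 * 8^k * real p powr (real \<nu> - 1/2)"
proof -
  define P where "P = real p"
  have P1: "1 \<le> P" using p by (simp add: P_def)
  have Ppos: "0 < P" using P1 by simp
  have PW0: "0 \<le> P powr (real \<nu> - 1/2)" by simp
  show ?thesis
  proof (cases "k < \<nu>")
    case True
    have s2: "sqrt (2 / (2 * real (p - k) + 1)) \<le> 2"
    proof -
      have "2 / (2 * real (p - k) + 1) \<le> 4" by (simp add: divide_le_eq)
      then have "sqrt (2 / (2 * real (p - k) + 1)) \<le> sqrt 4" by (rule real_sqrt_le_mono)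
      then show ?thesis by simp
    qed
    have pk: "P^k \<le> P powr (real \<nu> - 1/2)"
    proof -
      have "P^k = P powr (real k)" using Ppos by (simp add: powr_realpow)
      also have "\<dots> \<le> P powr (real \<nu> - 1/2)" using True P1 by (intro powr_mono) auto
      finally show ?thesis .
    qed
    have "(4 * P)^k * sqrt (2 / (2 * real (p - k) + 1)) \<le> (4^k * P powr (real \<nu> - 1/2)) * 2"
      unfolding power_mult_distrib using pk s2 Ppos by (intro mult_mono) auto
    also have "\<dots> \<le> 2 * 8^k * P powr (real \<nu> - 1/2)"
    proof -
      have "(4::real)^k \<le> 8^k" by (rule power_mono) auto
      then show ?thesis using PW0 by (simp add: mult_right_mono algebra_simps)
    qed
    finally show ?thesis unfolding P_def .
  next
    case False
    then have kv: "k = \<nu>" using k by simp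
    have ratio: "2 * P / (2 * real (p - \<nu>) + 1) \<le> 4 * 4^\<nu>"
    proof (cases "2 * \<nu> \<le> p")
      case True
      then have "real (p - \<nu>) = P - real \<nu>" by (simp add: P_def of_nat_diff)
      moreover have "2 * real \<nu> \<le> P" using True by (simp add: P_def)
      ultimately have "P \<le> 2 * real (p - \<nu>) + 1" by simp
      then have "2 * P / (2 * real (p - \<nu>) + 1) \<le> 2"
        using Ppos by (simp add: divide_le_eq)
      also have "(2::real) \<le> 4 * 4^\<nu>" using one_le_power[of "4::real" \<nu>] by linarith
      finally show ?thesis .
    next
      case False
      have "2 * P / (2 * real (p - \<nu>) + 1) \<le> 2 * P" using Ppos by (simp add: divide_le_eq)
      also have "\<dots> \<le> 4 * real \<nu>" using False by (simp add: P_def)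
      also have "real \<nu> \<le> 4^\<nu>"
      proof -
        have "\<nu> < 2^\<nu>" by (rule less_exp)
        also have "(2::nat)^\<nu> \<le> 4^\<nu>" by (rule power_mono) auto
        finally have "\<nu> \<le> 4^\<nu>" by simp
        then show ?thesis by (metis of_nat_le_iff of_nat_numeral of_nat_power)
      qed
      then have "4 * real \<nu> \<le> 4 * 4^\<nu>" by simp
      finally show ?thesis .
    qed
    have sq: "sqrt P * sqrt (2 / (2 * real (p - \<nu>) + 1)) \<le> 2 * 2^\<nu>"
    proof -
      have "sqrt P * sqrt (2 / (2 * real (p - \<nu>) + 1)) = sqrt (2 * P / (2 * real (p - \<nu>) + 1))"
        by (simp add: real_sqrt_mult[symmetric])
      also have "\<dots> \<le> sqrt (4 * 4^\<nu>)" using ratio by (rule real_sqrt_le_mono)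
      also have "4 * 4^\<nu> = (2 * 2^\<nu> :: real)^2"
      proof -
        have "(4::real)^\<nu> = (2^2)^\<nu>" by simp
        also have "\<dots> = (2^\<nu>)^2" by (metis mult.commute power_mult)
        finally show ?thesis by (simp add: power_mult_distrib)
      qed
      also have "sqrt \<dots> = 2 * 2^\<nu>" by (simp only: real_sqrt_abs) simp
      finally show ?thesis .
    qed
    have Pv: "P^\<nu> = P powr (real \<nu> - 1/2) * sqrt P"
    proof -
      have "P powr (real \<nu> - 1/2) * sqrt P = P powr (real \<nu> - 1/2) * P powr (1/2)"
        using Ppos by (simp add: powr_half_sqrt)
      also have "\<dots> = P powr (real \<nu>)" by (simp add: powr_add[symmetric])
      also have "\<dots> = P^\<nu>" using Ppos by (simp add: powr_realpow)
      finally show ?thesis by simp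
    qed
    have "(4 * P)^\<nu> * sqrt (2 / (2 * real (p - \<nu>) + 1)) = 4^\<nu> * P powr (real \<nu> - 1/2) * (sqrt P * sqrt (2 / (2 * real (p - \<nu>) + 1)))"
      unfolding power_mult_distrib Pv by (simp add: mult_ac)
    also have "\<dots> \<le> 4^\<nu> * P powr (real \<nu> - 1/2) * (2 * 2^\<nu>)"
      using sq PW0 by (intro mult_left_mono) auto
    also have "\<dots> = 2 * 8^\<nu> * P powr (real \<nu> - 1/2)"
    proof -
      have "(4::real)^\<nu> * 2^\<nu> = 8^\<nu>" by (simp flip: power_mult_distrib)
      then show ?thesis by (simp add: algebra_simps)
    qed
    finally show ?thesis unfolding P_def kv .
  qed
qed

lemma exp8_bound: "(\<Sum>k\<le>\<nu>. 8^k / fact k) \<le> exp (8::real)"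
proof -
  have "(\<Sum>k\<le>\<nu>. inverse (fact k) * (8::real)^k) \<le> (\<Sum>k. inverse (fact k) * (8::real)^k)"
    by (rule sum_le_suminf[OF summable_exp]) auto
  then show ?thesis by (simp add: exp_def field_simps)
qed

lemma Nm_qpol_bound:
  assumes p: "1 \<le> p"
  shows "Nm (qpol p \<nu>) \<le> 2 * exp 8 * real p powr (real \<nu> - 1/2)"
proof -
  define PW where "PW = real p powr (real \<nu> - 1/2)"
  define s where "s k = sqrt (2 / (2 * real (p - k) + 1))" for k
  have PW0: "0 \<le> PW" by (simp add: PW_def)
  have "Nm (qpol p \<nu>) \<le> (\<Sum>k\<le>\<nu>. \<bar>Acf p k\<bar> * Nm (psi p k) + \<bar>Bcf p k\<bar> * Nm (psi (Suc p) k))"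
    by (rule Nm_qpol)
  also have "\<dots> \<le> (\<Sum>k\<le>\<nu>. (4 * real p)^k / fact k * s k)"
  proof (rule sum_mono)
    fix k assume "k \<in> {..\<nu>}"
    have s0: "0 \<le> s k" by (simp add: s_def)
    have A: "\<bar>Acf p k\<bar> * Nm (psi p k) \<le> (4 * real p)^k / fact k / 2 * s k"
    proof -
      have "\<bar>Acf p k\<bar> * Nm (psi p k) \<le> \<bar>cf (Suc p) k\<bar> / 2 * (bp p k * s k)"
      proof -
        have "\<bar>Acf p k\<bar> = \<bar>cf (Suc p) k\<bar> / 2" by (simp add: Acf_def abs_mult)
        then show ?thesis unfolding s_def by (simp only:) (intro mult_left_mono Nm_psi, simp)
      qed
      also have "\<dots> = (\<bar>cf (Suc p) k\<bar> * bp p k) / 2 * s k" by simp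
      also have "\<dots> \<le> (4 * real p)^k / fact k / 2 * s k"
        using Z1_bound[OF p, of k] s0 by (intro mult_right_mono divide_right_mono) auto
      finally show ?thesis .
    qed
    have B: "\<bar>Bcf p k\<bar> * Nm (psi (Suc p) k) \<le> (4 * real p)^k / fact k / 2 * s k"
    proof -
      have ss: "sqrt (2 / (2 * real (Suc p - k) + 1)) \<le> s k"
        unfolding s_def by (simp add: frac_le)
      have bp0: "0 \<le> bp (Suc p) k" unfolding bp_def by (intro prod_nonneg) auto
      have "\<bar>Bcf p k\<bar> * Nm (psi (Suc p) k) \<le> \<bar>cf p k\<bar> / 2 * (bp (Suc p) k * sqrt (2 / (2 * real (Suc p - k) + 1)))"
      proof -
        have "\<bar>Bcf p k\<bar> = \<bar>cf p k\<bar> / 2" by (simp add: Bcf_def abs_mult)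
        then show ?thesis by (simp only:) (intro mult_left_mono Nm_psi, simp)
      qed
      also have "\<dots> \<le> \<bar>cf p k\<bar> / 2 * (bp (Suc p) k * s k)"
        using ss bp0 by (intro mult_left_mono) auto
      also have "\<dots> = (\<bar>cf p k\<bar> * bp (Suc p) k) / 2 * s k" by simp
      also have "\<dots> \<le> (4 * real p)^k / fact k / 2 * s k"
        using Z2_bound[OF p, of k] s0 by (intro mult_right_mono divide_right_mono) auto
      finally show ?thesis .
    qed
    show "\<bar>Acf p k\<bar> * Nm (psi p k) + \<bar>Bcf p k\<bar> * Nm (psi (Suc p) k) \<le> (4 * real p)^k / fact k * s k"
      using A B by simp
  qed
  also have "\<dots> \<le> (\<Sum>k\<le>\<nu>. 2 * PW * (8^k / fact k))"
  proof (rule sum_mono)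
    fix k assume "k \<in> {..\<nu>}"
    then have "(4 * real p)^k * s k \<le> 2 * 8^k * PW" unfolding s_def PW_def
      using term_bound[OF p, of k \<nu>] by simp
    then show "(4 * real p)^k / fact k * s k \<le> 2 * PW * (8^k / fact k)"
      by (simp add: divide_right_mono field_simps)
  qed
  also have "\<dots> = 2 * PW * (\<Sum>k\<le>\<nu>. 8^k / fact k)" by (simp add: sum_distrib_left)
  also have "\<dots> \<le> 2 * PW * exp 8" using PW0 exp8_bound by (intro mult_left_mono) auto
  finally show ?thesis unfolding PW_def by (simp add: mult_ac)
qed

theorem lemma7:
  shows "\<exists>C::real. \<forall>p::nat. \<forall>\<nu>::nat. p \<ge> 1 \<longrightarrow>
           L2sq (qpol p \<nu>) \<le> C * real p powr (2 * real \<nu> - 1)"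
proof (intro exI allI impI)
  fix p \<nu> :: nat
  assume p: "p \<ge> 1"
  define PW where "PW = real p powr (real \<nu> - 1/2)"
  have PW0: "0 \<le> PW" by (simp add: PW_def)
  have N: "Nm (qpol p \<nu>) \<le> 2 * exp 8 * PW" unfolding PW_def by (rule Nm_qpol_bound[OF p])
  have "L2sq (qpol p \<nu>) = (Nm (qpol p \<nu>))^2"
    unfolding L2sq_J Nm_def by (simp add: J_sq_nonneg)
  also have "\<dots> \<le> (2 * exp 8 * PW)^2"
    using N Nm_nonneg by (intro power_mono) auto
  also have "\<dots> = (2 * exp 8)^2 * (PW * PW)" by (simp add: power2_eq_square mult_ac)
  also have "PW * PW = real p powr (2 * real \<nu> - 1)"
    unfolding PW_def by (simp add: powr_add[symmetric])
  finally show "L2sq (qpol p \<nu>) \<le> (2 * exp 8)^2 * real p powr (2 * real \<nu> - 1)" .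
qed

end
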